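(* Let $K$ be a number field of degree $n_K$ and absolute discriminant $d_K$. Let $c,r,\eta$ be positive real numbers with $0<\eta\le\tfrac12$ and $$-\tfrac12<c-r<-\eta<1+\eta<c,$$ and let $T\ge 5/7$. With the notation below, \begin{align*} \int_{0}^\pi F_{c,r} (\theta)\, d\theta & \leq n_K \int_0^{\theta_{1 + \eta}} \log \zeta (\sigma)\, d \theta + \frac{1}{2(T+2)} \int_0^{\theta_{1 + \eta}} L_{-1}^{\star} (\theta)\, d\theta + {\theta_{1 + \eta}} \log (T+2)\\ & + n_K ( \log \zeta (1 + \eta)) (\theta_{-\eta} -\theta_{1 + \eta} ) + \Big( \log \frac{d_K(T+2)^{n_K}}{(2\pi)^{n_K}} \Big) \kappa_1 \\ & + \frac{n_K}{T+2}\kappa_4 + \frac{1}{2(T+2)} \int_{\theta_{1 + \eta}}^{\theta_{-\eta}} L_1^\star (\theta)\, d \theta +({\theta_{-\eta}} - {\theta_{1 + \eta}})\log (3(T+2))\\ & + n_K \int_{\theta_{-\eta}}^\pi \log \zeta (1 - \sigma)\, d\theta +\frac{1}{2(T+2)} \int_{\theta_{-\eta}}^\pi L_{-1}^\star (\theta )\, d \theta + (\pi -{\theta_{-\eta}})\log (T+2) + \frac{n_K}{T+2} \kappa_5, \end{align*} where inside the integrals $\sigma=c+r\cos\theta$.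
   Context: $\zeta$ is the Riemann zeta function. For $x\in\mathbb R$, $[x]$ is the integer closest to $x$ (ties broken toward $0$). For real $y$, $\theta_y=0$ if $c+r\le y$, $\theta_y=\arccos\frac{y-c}{r}$ if $c-r\le y\le c+r$, and $\theta_y=\pi$ if $y\le c-r$. For integers $j$, $$L_j(\theta)=\log\frac{(j+c+r\cos\theta)^2+(|r\sin\theta|+T)^2}{(T+2)^2},\qquad L^\star_j(\theta)=2r\sin\theta-4+\tfrac{7}{19}\big((j+c+r\cos\theta)^2+(r\sin\theta- 2)^2\big).$$ With $\sigma=c+r\cos\theta$: $\kappa_1=\int_{\theta_{1 + \eta}}^{\theta_{-\eta}} \frac{1+ \eta - \sigma}{2}\, d \theta + \int_{\theta_{-\eta}}^\pi \frac{1 - 2\sigma}{2}\, d \theta$, $\kappa_4=\frac{1}{4}\int_{\theta_{1+\eta}}^{\theta_{-\eta}}(1+\eta-\sigma)L^\star_1(\theta)\,d\theta$, $\kappa_5=\frac{1}{4}\int_{\theta_{-\eta}}^{\theta_{-1/2}}(1-2\sigma)L^\star_1(\theta)\,d\theta$. The function $F_{c,r}:[-\pi,\pi]\to\mathbb R$ is defined, with $\sigma=c+r\cos\theta$, by: for $\sigma\ge 1+\eta$, $F_{c,r}(\theta)=n_K\log\zeta(\sigma)+\frac12L_{-1}(\theta)+\log(T+2)$; for $-\eta\le\sigma<1+\eta$, $F_{c,r}(\theta)= n_K\log\zeta(1+\eta)+\frac{n_K(1+\eta-\sigma)+2}{4}L_1(\theta)+\frac{n_K(1+\eta-\sigma)+2}{2}\log(T+2)+\frac{1+\eta-\sigma}{2}\log\frac{d_K}{(2\pi)^{n_K}}+\log3$;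 for $\sigma<-\eta$, $F_{c,r}(\theta)= n_K\log\zeta(1-\sigma)+\frac{1}{2}L_{-1}(\theta)+\log(T+2)+\frac{1-2\sigma}{2}\log\Big(\frac{d_K(T+2)^{n_K}}{(2\pi)^{n_K}}\Big)+\frac{(1-2\sigma+2[\sigma])n_K}{4}L_{1-[\sigma]}(\theta)+\frac{n_K}{2}\sum_{j=1}^{-[\sigma]}L_{j-1}(\theta)$ (empty sum $=0$). *)

theory Defs
  imports "HOL-Analysis.Analysis"
begin

text \<open>Riemann zeta function on real arguments s > 1 (Dirichlet series); all uses below
  have argument > 1.\<close>
definition zeta_real :: "real \<Rightarrow> real" where
  "zeta_real s = (\<Sum>n. 1 / (real (Suc n)) powr s)"

text \<open>Nearest integer, ties broken toward 0.\<close>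
definition near_int :: "real \<Rightarrow> int" where
  "near_int x = (if x \<ge> 0 then \<lceil>x - 1/2\<rceil> else \<lfloor>x + 1/2\<rfloor>)"

definition theta_y :: "real \<Rightarrow> real \<Rightarrow> real \<Rightarrow> real" where
  "theta_y c r y = (if c + r \<le> y then 0
                    else if c - r \<le> y then arccos ((y - c) / r)
                    else pi)"

definition Lj :: "real \<Rightarrow> real \<Rightarrow> real \<Rightarrow> int \<Rightarrow> real \<Rightarrow> real" where
  "Lj c r T j \<theta> = ln (((of_int j + c + r * cos \<theta>)\<^sup>2 + (\<bar>r * sin \<theta>\<bar> + T)\<^sup>2) / (T + 2)\<^sup>2)"

definition Lstar :: "real \<Rightarrow> real \<Rightarrow> int \<Rightarrow> real \<Rightarrow> real" where
  "Lstar c r j \<theta> = 2 * r * sin \<theta> - 4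
     + 7/19 * ((of_int j + c + r * cos \<theta>)\<^sup>2 + (r * sin \<theta> - 2)\<^sup>2)"

definition kappa1 :: "real \<Rightarrow> real \<Rightarrow> real \<Rightarrow> real" where
  "kappa1 c r \<eta> =
     integral {theta_y c r (1 + \<eta>)..theta_y c r (-\<eta>)} (\<lambda>\<theta>. (1 + \<eta> - (c + r * cos \<theta>)) / 2)
   + integral {theta_y c r (-\<eta>)..pi} (\<lambda>\<theta>. (1 - 2 * (c + r * cos \<theta>)) / 2)"

definition kappa4 :: "real \<Rightarrow> real \<Rightarrow> real \<Rightarrow> real" where
  "kappa4 c r \<eta> = 1/4 *
     integral {theta_y c r (1 + \<eta>)..theta_y c r (-\<eta>)}
       (\<lambda>\<theta>. (1 + \<eta> - (c + r * cos \<theta>)) * Lstar c r 1 \<theta>)"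

definition kappa5 :: "real \<Rightarrow> real \<Rightarrow> real \<Rightarrow> real" where
  "kappa5 c r \<eta> = 1/4 *
     integral {theta_y c r (-\<eta>)..theta_y c r (-1/2)}
       (\<lambda>\<theta>. (1 - 2 * (c + r * cos \<theta>)) * Lstar c r 1 \<theta>)"

definition Fcr :: "nat \<Rightarrow> real \<Rightarrow> real \<Rightarrow> real \<Rightarrow> real \<Rightarrow> real \<Rightarrow> real \<Rightarrow> real" where
  "Fcr nK dK c r \<eta> T \<theta> =
    (let \<sigma> = c + r * cos \<theta> in
     if \<sigma> \<ge> 1 + \<eta> then
       real nK * ln (zeta_real \<sigma>) + 1/2 * Lj c r T (-1) \<theta> + ln (T + 2)
     else if -\<eta> \<le> \<sigma> then
       real nK * ln (zeta_real (1 + \<eta>))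
       + (real nK * (1 + \<eta> - \<sigma>) + 2) / 4 * Lj c r T 1 \<theta>
       + (real nK * (1 + \<eta> - \<sigma>) + 2) / 2 * ln (T + 2)
       + (1 + \<eta> - \<sigma>) / 2 * ln (dK / (2 * pi) ^ nK)
       + ln 3
     else
       real nK * ln (zeta_real (1 - \<sigma>)) + 1/2 * Lj c r T (-1) \<theta> + ln (T + 2)
       + (1 - 2 * \<sigma>) / 2 * ln (dK * (T + 2) ^ nK / (2 * pi) ^ nK)
       + (1 - 2 * \<sigma> + 2 * of_int (near_int \<sigma>)) * real nK / 4 * Lj c r T (1 - near_int \<sigma>) \<theta>
       + real nK / 2 * (\<Sum>j\<in>{1..- near_int \<sigma>}. Lj c r T (j - 1) \<theta>))"

end

theory Submission
  imports Defs "HOL-Analysis.Equivalence_Measurable_On_Borel"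
begin


lemma Lj_le:
  fixes T r c :: real
  assumes T: "T \<ge> 5/7" and r: "r > 0" and s: "sin \<theta> \<ge> 0"
  shows "Lj c r T j \<theta> \<le> Lstar c r j \<theta> / (T+2)"
proof -
  define A where "A = (of_int j + c + r*cos \<theta>)^2"
  define B where "B = r * sin \<theta>"
  have B0: "B \<ge> 0" using r s by (simp add: B_def)
  have ab: "\<bar>r * sin \<theta>\<bar> = B" using B0 B_def by simp
  have Tp: "T + 2 > 0" using T by simp
  define q where "q = (A + (B+T)^2)/(T+2)^2"
  have "(B+T)^2 > 0" using B0 T by simp
  then have qpos: "q > 0" unfolding q_def using Tp by (intro divide_pos_pos add_nonneg_pos) (auto simp: A_def)
  have L: "Lj c r T j \<theta> = ln q" by (simp add: Lj_def q_def A_def ab)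
  have lq: "ln q \<le> q - 1" using qpos by (rule ln_le_minus_one)
  define X where "X = A + (B-2)^2"
  have X0: "X \<ge> 0" by (simp add: X_def A_def)
  have num: "A + (B+T)^2 = (T+2)^2 + X + (T+2)*(2*B-4)" unfolding X_def
    by (simp add: power2_eq_square algebra_simps)
  have q1: "q - 1 = X/(T+2)^2 + (2*B-4)/(T+2)" unfolding q_def num using Tp
    by (simp add: add_divide_distrib power2_eq_square)
  have Ls0: "Lstar c r j \<theta> = (2*B-4) + 7/19 * X"
    unfolding Lstar_def X_def A_def B_def by (simp add: algebra_simps)
  have Ls: "Lstar c r j \<theta> / (T+2) = (2*B-4)/(T+2) + 7/19 * (X/(T+2))"
    unfolding Ls0 by (simp add: add_divide_distrib)
  have i1: "1/(T+2) \<le> 7/19" using T Tp by (simp add: field_simps)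
  have "X/(T+2)^2 = (X/(T+2)) * (1/(T+2))" by (simp add: power2_eq_square)
  also have "\<dots> \<le> (X/(T+2)) * (7/19)" using X0 Tp i1 by (intro mult_left_mono) auto
  finally have "X/(T+2)^2 \<le> (X/(T+2)) * (7/19)" .
  then have "X/(T+2)^2 \<le> 7/19 * (X/(T+2))" by (simp only: mult.commute)
  then show ?thesis using L lq q1 Ls by linarith
qed

lemma zeta_summable: "s > 1 \<Longrightarrow> summable (\<lambda>n. 1 / real (Suc n) powr s)"
proof -
  assume "s > 1"
  then have "summable (\<lambda>n. real n powr (-s))" by (simp add: summable_real_powr_iff)
  then have "summable (\<lambda>n. real (Suc n) powr (-s))" by (subst summable_Suc_iff)
  then show ?thesis by (simp add: powr_minus divide_inverse)
qed

lemma zeta_pos: "s > 1 \<Longrightarrow> zeta_real s > 0"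
  unfolding zeta_real_def by (rule suminf_pos[OF zeta_summable]) auto

lemma zeta_antimono: "1 < t \<Longrightarrow> t \<le> s \<Longrightarrow> zeta_real s \<le> zeta_real t"
  unfolding zeta_real_def
  apply (rule suminf_le)
    apply (intro divide_left_mono powr_mono)
  apply auto[4]
  using zeta_summable[of s] zeta_summable[of t] by auto


lemma Lj_cont:
  fixes T :: real assumes T: "T > 0"
  shows "continuous_on S (Lj c r T j)"
proof -
  have pos: "((of_int j + c + r * cos x)\<^sup>2 + (\<bar>r * sin x\<bar> + T)\<^sup>2) / (T + 2)\<^sup>2 > 0" for x
  proof -
    have "(\<bar>r * sin x\<bar> + T)\<^sup>2 > 0" using T by (simp add: add_nonneg_pos)
    then have "(of_int j + c + r * cos x)\<^sup>2 + (\<bar>r * sin x\<bar> + T)\<^sup>2 > 0"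
      by (simp add: add_nonneg_pos)
    then show ?thesis using T by (intro divide_pos_pos) auto
  qed
  have "continuous_on S (\<lambda>\<theta>. ln (((of_int j + c + r * cos \<theta>)\<^sup>2 + (\<bar>r * sin \<theta>\<bar> + T)\<^sup>2) / (T + 2)\<^sup>2))"
    apply (intro continuous_intros)
    using pos T by (auto simp: less_irrefl)
  then show ?thesis by (simp add: Lj_def[abs_def])
qed

lemma Lstar_cont: "continuous_on S (Lstar c r j)"
proof -
  have "continuous_on S (\<lambda>\<theta>. 2 * r * sin \<theta> - 4
     + 7/19 * ((of_int j + c + r * cos \<theta>)\<^sup>2 + (r * sin \<theta> - 2)\<^sup>2))"
    by (intro continuous_intros)
  then show ?thesis by (simp add: Lstar_def[abs_def])
qed

lemma near_int_zero: "-1/2 < x \<Longrightarrow> x < 0 \<Longrightarrow> near_int x = 0"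
  unfolding near_int_def by (simp add: floor_eq_iff)


lemma Fcr_case3:
  assumes n1: "\<not> (c + r * cos \<theta> \<ge> 1 + \<eta>)" and n2: "\<not> (- \<eta> \<le> c + r * cos \<theta>)"
    and ni: "near_int (c + r * cos \<theta>) = 0"
  shows "Fcr nK dK c r \<eta> T \<theta> = real nK * ln (zeta_real (1 - (c + r * cos \<theta>))) + 1/2 * Lj c r T (-1) \<theta> + ln (T + 2)
       + (1 - 2 * (c + r * cos \<theta>)) / 2 * ln (dK * (T + 2) ^ nK / (2 * pi) ^ nK)
       + (1 - 2 * (c + r * cos \<theta>)) * real nK / 4 * Lj c r T 1 \<theta>"
  unfolding Fcr_def Let_def if_not_P[OF n1] if_not_P[OF n2] ni
  by simp



theorem proposition3p12:
  fixes nK :: nat and dK :: int and c r \<eta> T :: real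
  assumes nK: "nK \<ge> 1" and dK: "dK \<ge> 1"
    and pos: "c > 0" "r > 0" "\<eta> > 0" and eta: "\<eta> \<le> 1/2"
    and ineq: "-1/2 < c - r" "c - r < -\<eta>" "-\<eta> < 1 + \<eta>" "1 + \<eta> < c"
    and T: "T \<ge> 5/7"
  defines "th \<equiv> theta_y c r"
  shows "integral {0..pi} (Fcr nK (real_of_int dK) c r \<eta> T) \<le>
      real nK * integral {0..th (1 + \<eta>)} (\<lambda>\<theta>. ln (zeta_real (c + r * cos \<theta>)))
    + 1 / (2 * (T + 2)) * integral {0..th (1 + \<eta>)} (Lstar c r (-1))
    + th (1 + \<eta>) * ln (T + 2)
    + real nK * ln (zeta_real (1 + \<eta>)) * (th (-\<eta>) - th (1 + \<eta>))
    + ln (real_of_int dK * (T + 2) ^ nK / (2 * pi) ^ nK) * kappa1 c r \<eta>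
    + real nK / (T + 2) * kappa4 c r \<eta>
    + 1 / (2 * (T + 2)) * integral {th (1 + \<eta>)..th (-\<eta>)} (Lstar c r 1)
    + (th (-\<eta>) - th (1 + \<eta>)) * ln (3 * (T + 2))
    + real nK * integral {th (-\<eta>)..pi} (\<lambda>\<theta>. ln (zeta_real (1 - (c + r * cos \<theta>))))
    + 1 / (2 * (T + 2)) * integral {th (-\<eta>)..pi} (Lstar c r (-1))
    + (pi - th (-\<eta>)) * ln (T + 2)
    + real nK / (T + 2) * kappa5 c r \<eta>"
proof -
  define a where "a = th (1 + \<eta>)"
  define b where "b = th (-\<eta>)"
  have a_eq: "a = arccos ((1 + \<eta> - c) / r)"
    unfolding a_def th_def theta_y_def using pos ineq by auto
  have b_eq: "b = arccos ((- \<eta> - c) / r)"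
    unfolding b_def th_def theta_y_def using pos ineq by auto
  have thh: "th (-1/2) = pi"
    unfolding th_def theta_y_def using pos ineq by auto
  have ra1: "-1 \<le> (- \<eta> - c) / r" "(- \<eta> - c) / r < (1 + \<eta> - c) / r" "(1 + \<eta> - c) / r \<le> 1"
    using pos ineq by (auto simp: field_simps)
  have ab: "a < b" unfolding a_eq b_eq by (rule arccos_less_arccos) (use ra1 in auto)
  have a0: "0 \<le> a" unfolding a_eq by (rule arccos_lbound) (use ra1 in auto)
  have bpi: "b \<le> pi" unfolding b_eq by (rule arccos_ubound) (use ra1 in auto)
  have cosa: "cos a = (1 + \<eta> - c) / r" unfolding a_eq by (rule cos_arccos) (use ra1 in auto)
  have cosb: "cos b = (- \<eta> - c) / r" unfolding b_eq by (rule cos_arccos) (use ra1 in auto)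
  have sig_a: "c + r * cos x \<ge> 1 + \<eta> \<longleftrightarrow> x \<le> a" if "0 \<le> x" "x \<le> pi" for x
  proof -
    have "c + r * cos x \<ge> 1 + \<eta> \<longleftrightarrow> cos a \<le> cos x"
      using pos unfolding cosa by (auto simp: field_simps)
    also have "\<dots> \<longleftrightarrow> x \<le> a" using that a0 ab bpi by (intro cos_mono_le_eq) auto
    finally show ?thesis .
  qed
  have sig_b: "c + r * cos x \<ge> - \<eta> \<longleftrightarrow> x \<le> b" if "0 \<le> x" "x \<le> pi" for x
  proof -
    have "c + r * cos x \<ge> - \<eta> \<longleftrightarrow> cos b \<le> cos x"
      using pos unfolding cosb by (auto simp: field_simps)
    also have "\<dots> \<longleftrightarrow> x \<le> b" using that a0 ab bpi by (intro cos_mono_le_eq) auto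
    finally show ?thesis .
  qed
  have sig_low: "c + r * cos x > -1/2" for x
  proof -
    have "r * cos x \<ge> r * (-1)" using pos by (intro mult_left_mono) auto
    then show ?thesis using ineq by linarith
  qed
  have sinpos: "sin x \<ge> 0" if "0 \<le> x" "x \<le> pi" for x using that by (rule sin_ge_zero)
  have Tp: "T + 2 > 0" "T > 0" using T by auto
  define F where "F = Fcr nK (real_of_int dK) c r \<eta> T"
  define l where "l = ln (T + 2)"
  define LD where "LD = ln (real_of_int dK / (2 * pi) ^ nK)"
  define lD where "lD = ln (real_of_int dK * (T + 2) ^ nK / (2 * pi) ^ nK)"
  have lD_eq: "lD = LD + real nK * l"
  proof -
    have "real_of_int dK * (T + 2) ^ nK / (2 * pi) ^ nK = (real_of_int dK / (2 * pi) ^ nK) * (T + 2) ^ nK"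
      by simp
    then have "lD = ln ((real_of_int dK / (2 * pi) ^ nK) * (T + 2) ^ nK)" unfolding lD_def by simp
    also have "\<dots> = ln (real_of_int dK / (2 * pi) ^ nK) + ln ((T + 2) ^ nK)"
      using dK Tp by (intro ln_mult_pos) auto
    also have "ln ((T + 2) ^ nK) = real nK * ln (T + 2)" using Tp by (simp add: ln_realpow)
    finally show ?thesis unfolding LD_def l_def .
  qed
  have l3: "ln (3 * (T + 2)) = ln 3 + l" unfolding l_def using Tp by (intro ln_mult_pos) auto
  define Z1 where "Z1 = (\<lambda>\<theta>. ln (zeta_real (c + r * cos \<theta>)))"
  define Z3 where "Z3 = (\<lambda>\<theta>. ln (zeta_real (1 - (c + r * cos \<theta>))))"
  define z where "z = ln (zeta_real (1 + \<eta>))"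
  have constI: "(\<lambda>x::real. k::real) integrable_on {u..v}" for k u v
    by (simp add: integrable_continuous_interval)
  have LsI: "Lstar c r j integrable_on {u..v}" for j u v
    by (intro integrable_continuous_interval Lstar_cont)
  have LjI: "Lj c r T j integrable_on {u..v}" for j u v
    using Tp by (intro integrable_continuous_interval Lj_cont) auto
  have cosI: "(\<lambda>\<theta>::real. (k1::real) + k2 * cos \<theta>) integrable_on {u..v}" for k1 k2 u v
    by (intro integrable_continuous_interval continuous_intros)
  have cosLI: "(\<lambda>\<theta>. ((k1::real) + k2 * cos \<theta>) * Lstar c r j \<theta>) integrable_on {u..v}" for k1 k2 j u v
    by (intro integrable_continuous_interval continuous_on_mult Lstar_cont continuous_intros)
  have cosLjI: "(\<lambda>\<theta>. ((k1::real) + k2 * cos \<theta>) * Lj c r T j \<theta>) integrable_on {u..v}" for k1 k2 j u v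
    using Tp by (intro integrable_continuous_interval continuous_intros Lj_cont) auto
  have Z1I: "Z1 integrable_on {0..a}"
  proof (rule integrable_on_mono_on)
    show "mono_on {0..a} Z1"
    proof (rule mono_onI)
      fix x y assume xy: "x \<in> {0..a}" "y \<in> {0..a}" "x \<le> y"
      have "cos y \<le> cos x" using xy ab bpi by (intro cos_monotone_0_pi_le) auto
      then have h1: "c + r * cos y \<le> c + r * cos x" using pos by (simp add: mult_left_mono)
      moreover have h2: "c + r * cos y \<ge> 1 + \<eta>" using sig_a[of y] xy ab bpi by auto
      ultimately have "zeta_real (c + r * cos x) \<le> zeta_real (c + r * cos y)"
        by (rule_tac zeta_antimono) (use h1 h2 pos in linarith)+
      moreover have "zeta_real (c + r * cos x) > 0"
        by (rule zeta_pos) (use h1 h2 pos in linarith)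
      ultimately show "Z1 x \<le> Z1 y" unfolding Z1_def by simp
    qed
  qed
  have Z3I: "Z3 integrable_on {b..pi}"
  proof -
    have "(\<lambda>\<theta>. - Z3 \<theta>) integrable_on {b..pi}"
    proof (rule integrable_on_mono_on)
      show "mono_on {b..pi} (\<lambda>\<theta>. - Z3 \<theta>)"
      proof (rule mono_onI)
        fix x y assume xy: "x \<in> {b..pi}" "y \<in> {b..pi}" "x \<le> y"
        have "cos y \<le> cos x" using xy ab a0 by (intro cos_monotone_0_pi_le) auto
        then have h1: "1 - (c + r * cos x) \<le> 1 - (c + r * cos y)" using pos by (simp add: mult_left_mono)
        moreover have h2: "c + r * cos x \<le> - \<eta>" using sig_b[of x] xy ab a0 pos
          by (cases "x = b") (auto simp: cosb)
        ultimately have "zeta_real (1 - (c + r * cos y)) \<le> zeta_real (1 - (c + r * cos x))"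
          by (rule_tac zeta_antimono) (use h1 h2 pos in linarith)+
        moreover have "zeta_real (1 - (c + r * cos y)) > 0"
          by (rule zeta_pos) (use h1 h2 pos in linarith)
        ultimately show "- Z3 x \<le> - Z3 y" unfolding Z3_def by simp
      qed
    qed
    then show ?thesis using integrable_neg by fastforce
  qed
  define w1 where "w1 = (\<lambda>\<theta>. (1 + \<eta> - (c + r * cos \<theta>)) / 2)"
  define w2 where "w2 = (\<lambda>\<theta>. (1 - 2 * (c + r * cos \<theta>)) / 2)"
  define k4f where "k4f = (\<lambda>\<theta>. (1 + \<eta> - (c + r * cos \<theta>)) * Lstar c r 1 \<theta>)"
  define k5f where "k5f = (\<lambda>\<theta>. (1 - 2 * (c + r * cos \<theta>)) * Lstar c r 1 \<theta>)"
  have w1I: "w1 integrable_on {u..v}" for u v unfolding w1_def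
    by (intro integrable_continuous_interval continuous_intros) auto
  have w2I: "w2 integrable_on {u..v}" for u v unfolding w2_def
    by (intro integrable_continuous_interval continuous_intros) auto
  have k4I: "k4f integrable_on {u..v}" for u v unfolding k4f_def
    by (intro integrable_continuous_interval continuous_on_mult Lstar_cont continuous_intros)
  have k5I: "k5f integrable_on {u..v}" for u v unfolding k5f_def
    by (intro integrable_continuous_interval continuous_on_mult Lstar_cont continuous_intros)
  have kap1: "kappa1 c r \<eta> = integral {a..b} w1 + integral {b..pi} w2"
    unfolding kappa1_def a_def b_def th_def w1_def w2_def ..
  have kap4: "kappa4 c r \<eta> = 1/4 * integral {a..b} k4f"
    unfolding kappa4_def a_def b_def th_def k4f_def ..
  have kap5: "kappa5 c r \<eta> = 1/4 * integral {b..pi} k5f"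
    using thh unfolding kappa5_def a_def b_def th_def k5f_def by simp
  have sig_le_a: "c + r * cos x \<le> 1 + \<eta>" if "a \<le> x" "x \<le> pi" for x
  proof -
    have "cos x \<le> cos a" using that a0 by (intro cos_monotone_0_pi_le) auto
    then have "r * cos x \<le> r * cos a" using pos by (simp add: mult_left_mono)
    then show ?thesis using cosa pos by simp
  qed
  have sig_le_b: "c + r * cos x \<le> - \<eta>" if "b \<le> x" "x \<le> pi" for x
  proof -
    have "cos x \<le> cos b" using that a0 ab by (intro cos_monotone_0_pi_le) auto
    then have "r * cos x \<le> r * cos b" using pos by (simp add: mult_left_mono)
    then show ?thesis using cosb pos by simp
  qed
  define h1 where "h1 = (\<lambda>\<theta>. real nK * Z1 \<theta> + 1/2 * Lj c r T (-1) \<theta> + l)"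
  define g1 where "g1 = (\<lambda>\<theta>. real nK * Z1 \<theta> + 1/(2*(T+2)) * Lstar c r (-1) \<theta> + l)"
  have F1: "F \<theta> = h1 \<theta>" if "\<theta> \<in> {0..a}" for \<theta>
  proof -
    have "c + r * cos \<theta> \<ge> 1 + \<eta>" using sig_a[of \<theta>] that ab bpi by auto
    then show ?thesis unfolding F_def Fcr_def h1_def Z1_def l_def Let_def by simp
  qed
  have h1I: "h1 integrable_on {0..a}" unfolding h1_def
    by (intro integrable_add integrable_on_mult_right Z1I LjI constI)
  have g1I: "g1 integrable_on {0..a}" unfolding g1_def
    by (intro integrable_add integrable_on_mult_right Z1I LsI constI)
  have F1I: "F integrable_on {0..a}" by (rule integrable_spike_finite[of "{}" _ _ h1]) (use h1I F1 in auto)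
  have hg1: "h1 \<theta> \<le> g1 \<theta>" if "\<theta> \<in> {0..a}" for \<theta>
  proof -
    have "Lj c r T (-1) \<theta> \<le> Lstar c r (-1) \<theta> / (T+2)"
      using that ab bpi T pos by (intro Lj_le sinpos) auto
    moreover have "1/(2*(T+2)) * Lstar c r (-1) \<theta> = 1/2 * (Lstar c r (-1) \<theta> / (T+2))" by simp
    ultimately show ?thesis unfolding h1_def g1_def by linarith
  qed
  have P1: "integral {0..a} F \<le> real nK * integral {0..a} Z1 + 1/(2*(T+2)) * integral {0..a} (Lstar c r (-1)) + a * l"
  proof -
    have "integral {0..a} F = integral {0..a} h1" using F1 by (intro integral_cong) auto
    also have "\<dots> \<le> integral {0..a} g1" using h1I g1I hg1 by (rule integral_le)
    also have "integral {0..a} g1 = real nK * integral {0..a} Z1 + 1/(2*(T+2)) * integral {0..a} (Lstar c r (-1)) + a * l"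
      unfolding g1_def using a0
      by (simp add: integral_add integrable_add integrable_on_mult_right integrable_on_divide Z1I LsI constI)
    finally show ?thesis .
  qed
  define h2 where "h2 = (\<lambda>\<theta>. real nK * z + (real nK * (1 + \<eta> - (c + r * cos \<theta>)) + 2) / 4 * Lj c r T 1 \<theta>
       + (real nK * (1 + \<eta> - (c + r * cos \<theta>)) + 2) / 2 * l + (1 + \<eta> - (c + r * cos \<theta>)) / 2 * LD + ln 3)"
  define g2 where "g2 = (\<lambda>\<theta>. real nK * z + real nK / (T+2) * (1/4 * k4f \<theta>) + 1/(2*(T+2)) * Lstar c r 1 \<theta>
       + lD * w1 \<theta> + ln (3 * (T + 2)))"
  have F2: "F \<theta> = h2 \<theta>" if "\<theta> \<in> {a..b} - {a}" for \<theta>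
  proof -
    have "\<not> c + r * cos \<theta> \<ge> 1 + \<eta>" using sig_a[of \<theta>] that a0 bpi by auto
    moreover have "c + r * cos \<theta> \<ge> - \<eta>" using sig_b[of \<theta>] that a0 bpi by auto
    ultimately show ?thesis unfolding F_def Fcr_def h2_def z_def l_def LD_def Let_def by simp
  qed
  have h2I: "h2 integrable_on {a..b}" unfolding h2_def
    by (intro integrable_continuous_interval continuous_on_mult Lj_cont[OF Tp(2)] continuous_intros) auto
  have g2I: "g2 integrable_on {a..b}" unfolding g2_def
    by (intro integrable_add integrable_on_mult_right k4I w1I LsI constI)
  have F2I: "F integrable_on {a..b}"
    by (rule integrable_spike_finite[of "{a}" _ _ h2]) (use h2I F2 in auto)
  have hg2: "h2 \<theta> \<le> g2 \<theta>" if "\<theta> \<in> {a..b}" for \<theta>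
  proof -
    define w where "w = 1 + \<eta> - (c + r * cos \<theta>)"
    have w0: "w \<ge> 0" unfolding w_def using sig_le_a[of \<theta>] that bpi by auto
    have h2w: "h2 \<theta> = real nK * z + (real nK * w + 2) / 4 * Lj c r T 1 \<theta> + (real nK * w + 2) / 2 * l + w / 2 * LD + ln 3"
      unfolding h2_def w_def ..
    have g2w: "g2 \<theta> = real nK * z + real nK / (T+2) * (1/4 * (w * Lstar c r 1 \<theta>)) + 1/(2*(T+2)) * Lstar c r 1 \<theta> + lD * (w / 2) + ln (3 * (T + 2))"
      unfolding g2_def w_def k4f_def w1_def ..
    have "Lj c r T 1 \<theta> \<le> Lstar c r 1 \<theta> / (T+2)"
      using that a0 ab bpi T pos by (intro Lj_le sinpos) auto
    then have i1: "(real nK * w + 2) / 4 * Lj c r T 1 \<theta> \<le> (real nK * w + 2) / 4 * (Lstar c r 1 \<theta> / (T+2))"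
      using w0 by (intro mult_left_mono) auto
    have e1g: "(real nK * w + 2) / 4 * (L / D) = real nK / D * (1/4 * (w * L)) + 1/(2*D) * L" if "D > 0" for D L
      using that by (simp add: field_simps)
    have e1: "(real nK * w + 2) / 4 * (Lstar c r 1 \<theta> / (T+2)) = real nK / (T+2) * (1/4 * (w * Lstar c r 1 \<theta>)) + 1/(2*(T+2)) * Lstar c r 1 \<theta>"
      using e1g[OF Tp(1)] .
    have e2: "(real nK * w + 2) / 2 * l + w / 2 * LD + ln 3 = lD * (w / 2) + ln (3 * (T + 2))"
      unfolding lD_eq l3 by (simp add: field_simps)
    show ?thesis unfolding h2w g2w using i1 e1 e2 by linarith
  qed
  have P2: "integral {a..b} F \<le> real nK * z * (b - a) + real nK / (T+2) * kappa4 c r \<eta>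
      + 1/(2*(T+2)) * integral {a..b} (Lstar c r 1) + lD * integral {a..b} w1 + (b - a) * ln (3 * (T + 2))"
  proof -
    have "integral {a..b} F = integral {a..b} h2"
      by (rule integral_spike[of "{a}"]) (use F2 in auto)
    also have "\<dots> \<le> integral {a..b} g2" using h2I g2I hg2 by (rule integral_le)
    also have "integral {a..b} g2 = real nK * z * (b - a) + real nK / (T+2) * kappa4 c r \<eta>
      + 1/(2*(T+2)) * integral {a..b} (Lstar c r 1) + lD * integral {a..b} w1 + (b - a) * ln (3 * (T + 2))"
      unfolding g2_def kap4 using ab
      by (simp add: integral_add integrable_add integrable_on_mult_right integrable_on_divide k4I w1I LsI constI)
    finally show ?thesis .
  qed
  define h3 where "h3 = (\<lambda>\<theta>. real nK * Z3 \<theta> + 1/2 * Lj c r T (-1) \<theta> + l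
       + (1 - 2 * (c + r * cos \<theta>)) / 2 * lD + (1 - 2 * (c + r * cos \<theta>)) * real nK / 4 * Lj c r T 1 \<theta>)"
  define g3 where "g3 = (\<lambda>\<theta>. real nK * Z3 \<theta> + 1/(2*(T+2)) * Lstar c r (-1) \<theta> + l
       + lD * w2 \<theta> + real nK / (T+2) * (1/4 * k5f \<theta>))"
  have F3: "F \<theta> = h3 \<theta>" if "\<theta> \<in> {b..pi} - {b}" for \<theta>
  proof -
    have lt: "c + r * cos \<theta> < - \<eta>" using sig_b[of \<theta>] that a0 ab by auto
    then have n1: "\<not> c + r * cos \<theta> \<ge> 1 + \<eta>" and n2: "\<not> - \<eta> \<le> c + r * cos \<theta>" using pos by auto
    have ni: "near_int (c + r * cos \<theta>) = 0" using lt sig_low[of \<theta>] pos by (intro near_int_zero) auto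
    show ?thesis unfolding F_def h3_def Z3_def l_def lD_def by (rule Fcr_case3[OF n1 n2 ni])
  qed
  have i4: "(\<lambda>\<theta>. (1 - 2 * (c + r * cos \<theta>)) / 2 * lD) integrable_on {b..pi}"
    by (intro integrable_continuous_interval continuous_intros) auto
  have i5: "(\<lambda>\<theta>. (1 - 2 * (c + r * cos \<theta>)) * real nK / 4 * Lj c r T 1 \<theta>) integrable_on {b..pi}"
    by (intro integrable_continuous_interval continuous_on_mult[OF _ Lj_cont[OF Tp(2)]] continuous_intros) auto
  have h3I: "h3 integrable_on {b..pi}" unfolding h3_def
    by (intro i4 i5 integrable_add integrable_on_mult_right Z3I LjI constI)
  have g3I: "g3 integrable_on {b..pi}" unfolding g3_def
    by (intro integrable_add integrable_on_mult_right Z3I k5I w2I LsI constI)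
  have F3I: "F integrable_on {b..pi}"
    by (rule integrable_spike_finite[of "{b}" _ _ h3]) (use h3I F3 in auto)
  have hg3: "h3 \<theta> \<le> g3 \<theta>" if "\<theta> \<in> {b..pi}" for \<theta>
  proof -
    define w where "w = 1 - 2 * (c + r * cos \<theta>)"
    have w0: "w \<ge> 0" unfolding w_def using sig_le_b[of \<theta>] that pos by auto
    have h3w: "h3 \<theta> = real nK * Z3 \<theta> + 1/2 * Lj c r T (-1) \<theta> + l + w / 2 * lD + w * real nK / 4 * Lj c r T 1 \<theta>"
      unfolding h3_def w_def ..
    have g3w: "g3 \<theta> = real nK * Z3 \<theta> + 1/(2*(T+2)) * Lstar c r (-1) \<theta> + l + lD * (w / 2) + real nK / (T+2) * (1/4 * (w * Lstar c r 1 \<theta>))"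
      unfolding g3_def w_def k5f_def w2_def ..
    have "Lj c r T 1 \<theta> \<le> Lstar c r 1 \<theta> / (T+2)"
      using that a0 ab bpi T pos by (intro Lj_le sinpos) auto
    then have i1: "w * real nK / 4 * Lj c r T 1 \<theta> \<le> w * real nK / 4 * (Lstar c r 1 \<theta> / (T+2))"
      using w0 by (intro mult_left_mono) auto
    have e1: "w * real nK / 4 * (Lstar c r 1 \<theta> / (T+2)) = real nK / (T+2) * (1/4 * (w * Lstar c r 1 \<theta>))"
      using Tp by (simp add: field_simps)
    have "Lj c r T (-1) \<theta> \<le> Lstar c r (-1) \<theta> / (T+2)"
      using that a0 ab bpi T pos by (intro Lj_le sinpos) auto
    moreover have "1/(2*(T+2)) * Lstar c r (-1) \<theta> = 1/2 * (Lstar c r (-1) \<theta> / (T+2))" by simp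
    ultimately show ?thesis unfolding h3w g3w using i1 e1 by (simp only: mult.commute[of _ lD])
  qed
  have P3: "integral {b..pi} F \<le> real nK * integral {b..pi} Z3 + 1/(2*(T+2)) * integral {b..pi} (Lstar c r (-1))
      + (pi - b) * l + lD * integral {b..pi} w2 + real nK / (T+2) * kappa5 c r \<eta>"
  proof -
    have "integral {b..pi} F = integral {b..pi} h3"
      by (rule integral_spike[of "{b}"]) (use F3 in auto)
    also have "\<dots> \<le> integral {b..pi} g3" using h3I g3I hg3 by (rule integral_le)
    also have "integral {b..pi} g3 = real nK * integral {b..pi} Z3 + 1/(2*(T+2)) * integral {b..pi} (Lstar c r (-1))
      + (pi - b) * l + lD * integral {b..pi} w2 + real nK / (T+2) * kappa5 c r \<eta>"
      unfolding g3_def kap5 using bpi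
      by (simp add: integral_add integrable_add integrable_on_mult_right integrable_on_divide Z3I k5I w2I LsI constI)
    finally show ?thesis .
  qed
  have F0b: "F integrable_on {0..b}" using F1I F2I a0 ab by (intro Henstock_Kurzweil_Integration.integrable_combine[of 0 a b]) auto
  have comb1: "integral {0..a} F + integral {a..b} F = integral {0..b} F"
    using F0b a0 ab by (intro Henstock_Kurzweil_Integration.integral_combine) auto
  have F0pi: "F integrable_on {0..pi}" using F0b F3I a0 ab bpi by (intro Henstock_Kurzweil_Integration.integrable_combine[of 0 b pi]) auto
  have comb2: "integral {0..b} F + integral {b..pi} F = integral {0..pi} F"
    using F0pi a0 ab bpi by (intro Henstock_Kurzweil_Integration.integral_combine) auto
  have k1: "lD * kappa1 c r \<eta> = lD * integral {a..b} w1 + lD * integral {b..pi} w2"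
    unfolding kap1 by (simp add: distrib_left)
  have tot: "integral {0..pi} F \<le> real nK * integral {0..a} Z1 + 1/(2*(T+2)) * integral {0..a} (Lstar c r (-1)) + a * l
    + real nK * z * (b - a) + lD * kappa1 c r \<eta> + real nK / (T+2) * kappa4 c r \<eta>
    + 1/(2*(T+2)) * integral {a..b} (Lstar c r 1) + (b - a) * ln (3 * (T + 2))
    + real nK * integral {b..pi} Z3 + 1/(2*(T+2)) * integral {b..pi} (Lstar c r (-1))
    + (pi - b) * l + real nK / (T+2) * kappa5 c r \<eta>"
    using P1 P2 P3 comb1 comb2 k1 by linarith
  then show ?thesis unfolding F_def a_def b_def Z1_def Z3_def z_def l_def lD_def .
qed

end
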